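(* Let $G_1=(T_1,A_1)$ and $G_2=(T_2,A_2)$ be games such that $T_1,T_2,A_1,A_2$ are at most countable, and suppose $G_2$ is injective in $\mathbf{Games}_{emb}$ with respect to embeddings between finite games. If $G=(T,A)\le G_1$ is a finite game and $f\colon G\to G_2$ is a game embedding, then there is a game embedding $\tilde f\colon G_1\to G_2$ with $\tilde f|_T=f$.
   Context: A game tree is $T\subseteq M^{<\omega}$ (some set $M$) closed under initial segments such that every $t\in T$ has an extension $t^\frown x\in T$; $|t|$ is the length and $t\restriction k$ the initial segment of length $k$. $\mathrm{Run}(T)=\{R\in M^\omega:R\restriction n\in T\ \forall n\}$. A game is $(T,A)$ with $A\subseteq\mathrm{Run}(T)$; it is finite if $\mathrm{Run}(T)$ is finite. For games, $(T,A)\le(T',A')$ means $T\subseteq T'$ and $A=A'\cap\mathrm{Run}(T)$. A chronological map $f\colon T_1\to T_2$ satisfies $|f(t)|=|t|$, $f(t\restriction k)=f(t)\restriction k$, and induces $\bar f$ on runs by $\bar f(R)\restriction n=f(R\restriction n)$. A game embedding $(T_1,A_1)\to(T_2,A_2)$ is an injective chronological $f$ with $\bar f(R)\in A_2\iff R\in A_1$ for all $R\in\mathrm{Run}(T_1)$. $\mathbf{Games}_{emb}$ is the category of games with game embeddings. A game $X$ is injective in $\mathbf{Games}_{emb}$ with respect to embeddings between finite games if for all finite games $C,D$, every game embedding $g\colon C\to D$ and every game embedding $f\colon C\to X$ there is a game embedding $h\colon D\to X$ with $h\circ g=f$. *)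

theory Defs
  imports Main "HOL-Library.Countable_Set"
begin

definition game_tree :: "'a list set \<Rightarrow> bool" where
  "game_tree T \<longleftrightarrow> (\<forall>t\<in>T. \<forall>k. take k t \<in> T) \<and> (\<forall>t\<in>T. \<exists>x. t @ [x] \<in> T)"

definition runs :: "'a list set \<Rightarrow> (nat \<Rightarrow> 'a) set" where
  "runs T = {R. \<forall>n. map R [0..<n] \<in> T}"

definition game :: "'a list set \<Rightarrow> (nat \<Rightarrow> 'a) set \<Rightarrow> bool" where
  "game T A \<longleftrightarrow> game_tree T \<and> A \<subseteq> runs T"

definition finite_game :: "'a list set \<Rightarrow> (nat \<Rightarrow> 'a) set \<Rightarrow> bool" where
  "finite_game T A \<longleftrightarrow> game T A \<and> finite (runs T)"

definition subgame :: "'a list set \<Rightarrow> (nat \<Rightarrow> 'a) set \<Rightarrow> 'a list set \<Rightarrow> (nat \<Rightarrow> 'a) set \<Rightarrow> bool" where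
  "subgame T A T' A' \<longleftrightarrow> T \<subseteq> T' \<and> A = A' \<inter> runs T"

text \<open>Chronological maps T1 \<rightarrow> T2 (only the values on T1 matter).\<close>
definition chronological :: "('a list \<Rightarrow> 'b list) \<Rightarrow> 'a list set \<Rightarrow> 'b list set \<Rightarrow> bool" where
  "chronological f T1 T2 \<longleftrightarrow> f ` T1 \<subseteq> T2 \<and>
     (\<forall>t\<in>T1. length (f t) = length t \<and> (\<forall>k. f (take k t) = take k (f t)))"

text \<open>Induced map on runs: (fbar f R) restricted to n equals f (R restricted to n).\<close>
definition fbar :: "('a list \<Rightarrow> 'b list) \<Rightarrow> (nat \<Rightarrow> 'a) \<Rightarrow> (nat \<Rightarrow> 'b)" where
  "fbar f R = (\<lambda>n. f (map R [0..<Suc n]) ! n)"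

definition game_emb :: "('a list \<Rightarrow> 'b list) \<Rightarrow> 'a list set \<Rightarrow> (nat \<Rightarrow> 'a) set
    \<Rightarrow> 'b list set \<Rightarrow> (nat \<Rightarrow> 'b) set \<Rightarrow> bool" where
  "game_emb f T1 A1 T2 A2 \<longleftrightarrow> chronological f T1 T2 \<and> inj_on f T1 \<and>
     (\<forall>R\<in>runs T1. fbar f R \<in> A2 \<longleftrightarrow> R \<in> A1)"

text \<open>Injectivity w.r.t. embeddings between finite games, where the finite games
  C, D range over games with moves of type nat (every finite game is
  isomorphic to one with moves in nat, so this loses no generality).\<close>
definition injective_fin :: "'b list set \<Rightarrow> (nat \<Rightarrow> 'b) set \<Rightarrow> bool" where
  "injective_fin TX AX \<longleftrightarrow>
     (\<forall>(TC::nat list set) AC (TD::nat list set) AD g f.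
        finite_game TC AC \<and> finite_game TD AD \<and>
        game_emb g TC AC TD AD \<and> game_emb f TC AC TX AX \<longrightarrow>
        (\<exists>h. game_emb h TD AD TX AX \<and> (\<forall>t\<in>TC. h (g t) = f t)))"

end

theory Submission
  imports Defs
begin

definition pre :: "(nat \<Rightarrow> 'a) \<Rightarrow> nat \<Rightarrow> 'a list" where
  "pre R n = map R [0..<n]"

definition pref :: "(nat \<Rightarrow> 'a) \<Rightarrow> 'a list set" where
  "pref R = range (pre R)"

definition tclosed :: "'a list set \<Rightarrow> bool" where
  "tclosed T \<longleftrightarrow> (\<forall>t\<in>T. \<forall>k. take k t \<in> T)"

lemma pre_length[simp]: "length (pre R n) = n"
  by (simp add: pre_def)

lemma pre_take[simp]: "take k (pre R n) = pre R (min k n)"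
  by (auto simp: pre_def take_map intro!: nth_equalityI)

lemma pre_nth[simp]: "i < n \<Longrightarrow> pre R n ! i = R i"
  by (simp add: pre_def)

lemma pre_Suc: "pre R (Suc n) = pre R n @ [R n]"
  by (simp add: pre_def)

lemma pre_0[simp]: "pre R 0 = []"
  by (simp add: pre_def)

lemma pre_eq_iff: "pre R n = pre S n \<longleftrightarrow> (\<forall>i<n. R i = S i)"
  by (auto simp: pre_def)

lemma pre_inj: "pre R n = pre S m \<Longrightarrow> n = m"
  by (metis pre_length)

lemma runs_iff: "R \<in> runs T \<longleftrightarrow> (\<forall>n. pre R n \<in> T)"
  by (simp add: runs_def pre_def)

lemma set_pre: "x \<in> set (pre R n) \<longleftrightarrow> (\<exists>i<n. x = R i)"
  by (auto simp: pre_def)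

lemma pre_map: "pre (g \<circ> R) n = map g (pre R n)"
  by (simp add: pre_def)

lemma butlast_pre: "butlast (pre R n) = pre R (n - 1)"
  by (cases n) (simp_all add: pre_Suc)

lemma game_tree_tclosed: "game_tree T \<Longrightarrow> tclosed T"
  by (simp add: game_tree_def tclosed_def)

lemma tclosed_Nil: "tclosed T \<Longrightarrow> T \<noteq> {} \<Longrightarrow> [] \<in> T"
  unfolding tclosed_def by (metis equals0I take0)

lemma tclosed_pre: "tclosed T \<Longrightarrow> pre R n \<in> T \<Longrightarrow> k \<le> n \<Longrightarrow> pre R k \<in> T"
  unfolding tclosed_def by (metis min.absorb1 pre_take)

lemma tclosed_pref: "tclosed (pref R)"
  by (auto simp: tclosed_def pref_def)

lemma game_tree_pref: "game_tree (pref R)"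
  unfolding game_tree_def pref_def
proof (intro conjI ballI allI)
  fix t k assume "t \<in> range (pre R)"
  then show "take k t \<in> range (pre R)" by auto
next
  fix t assume "t \<in> range (pre R)"
  then obtain n where "t = pre R n" by auto
  then have "t @ [R n] \<in> range (pre R)" by (metis pre_Suc rangeI)
  then show "\<exists>x. t @ [x] \<in> range (pre R)" by blast
qed

lemma runs_pref: "runs (pref R) = {R}"
proof -
  have "S = R" if "S \<in> runs (pref R)" for S
  proof
    fix i
    from that obtain m where "pre S (Suc i) = pre R m" by (auto simp: runs_iff pref_def)
    then have "pre S (Suc i) = pre R (Suc i)" using pre_inj by metis
    then show "S i = R i" by (auto simp: pre_eq_iff)
  qed
  then show ?thesis by (auto simp: runs_iff pref_def)
qed

lemma runs_Un:
  assumes "tclosed X" "tclosed Y"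
  shows "runs (X \<union> Y) = runs X \<union> runs Y"
proof -
  have "R \<in> runs X \<or> R \<in> runs Y" if "R \<in> runs (X \<union> Y)" for R
  proof (rule ccontr)
    assume "\<not> ?thesis"
    then obtain a b where a: "pre R a \<notin> X" and b: "pre R b \<notin> Y" by (auto simp: runs_iff)
    have "pre R (max a b) \<in> X \<union> Y" using that by (auto simp: runs_iff)
    then show False
      using a b tclosed_pre[OF assms(1)] tclosed_pre[OF assms(2)]
      by (metis Un_iff max.cobounded1 max.cobounded2)
  qed
  moreover have "runs X \<union> runs Y \<subseteq> runs (X \<union> Y)" by (auto simp: runs_iff)
  ultimately show ?thesis by blast
qed

lemma runs_mono: "X \<subseteq> Y \<Longrightarrow> runs X \<subseteq> runs Y"
  unfolding subset_iff runs_iff by blast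

lemma game_tree_Un: "game_tree X \<Longrightarrow> game_tree Y \<Longrightarrow> game_tree (X \<union> Y)"
  unfolding game_tree_def by blast

lemma node_to_run:
  assumes "game_tree T" "t \<in> T"
  shows "\<exists>R\<in>runs T. pre R (length t) = t"
proof -
  define nx where "nx s = (SOME x. s @ [x] \<in> T)" for s
  define s where "s n = rec_nat t (\<lambda>_ s. s @ [nx s]) n" for n
  have s0: "s 0 = t" and sS: "s (Suc n) = s n @ [nx (s n)]" for n by (simp_all add: s_def)
  have sT: "s n \<in> T" for n
  proof (induction n)
    case 0 then show ?case using assms s0 by simp
  next
    case (Suc n)
    then show ?case using assms(1) unfolding game_tree_def sS nx_def by (metis someI_ex)
  qed
  have slen: "length (s n) = length t + n" for n by (induction n) (simp_all add: s0 sS)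
  define R where "R i = (if i < length t then t ! i else nx (s (i - length t)))" for i
  have preR: "pre R (length t + n) = s n" for n
  proof (induction n)
    case 0 then show ?case by (auto simp: s0 R_def pre_def intro: nth_equalityI)
  next
    case (Suc n)
    have "pre R (length t + Suc n) = pre R (length t + n) @ [R (length t + n)]"
      by (simp add: pre_Suc[symmetric])
    also have "R (length t + n) = nx (s n)" by (simp add: R_def)
    then have "pre R (length t + n) @ [R (length t + n)] = s (Suc n)" using Suc by (simp add: sS)
    finally show ?case .
  qed
  have "pre R k \<in> T" for k
  proof (cases "k \<le> length t")
    case True
    then have "pre R k = take k (pre R (length t))" by simp
    moreover have "pre R (length t) = t" using preR[of 0] s0 by simp
    ultimately have "pre R k = take k t" by simp
    then show ?thesis using assms unfolding game_tree_def by simp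
  next
    case False
    then show ?thesis using preR[of "k - length t"] sT by simp
  qed
  then show ?thesis using preR[of 0] s0 by (auto simp: runs_iff)
qed
lemma chrono_pre:
  assumes "chronological g X Y" "\<forall>n. pre R n \<in> X"
  shows "pre (fbar g R) n = g (pre R n)"
proof -
  have len: "length (g (pre R m)) = m" for m using assms by (auto simp: chronological_def)
  have tk: "g (take k (pre R m)) = take k (g (pre R m))" for k m
    using assms unfolding chronological_def by blast
  show ?thesis
  proof (rule nth_equalityI)
    show "length (pre (fbar g R) n) = length (g (pre R n))" using len by simp
    fix i assume "i < length (pre (fbar g R) n)"
    then have i: "i < n" by simp
    have "g (pre R n) ! i = take (Suc i) (g (pre R n)) ! i" by simp
    also have "\<dots> = g (pre R (Suc i)) ! i" using tk[of "Suc i" n] i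
      by (metis min_absorb1 Suc_leI pre_take)
    finally show "pre (fbar g R) n ! i = g (pre R n) ! i"
      using i by (simp add: fbar_def pre_def)
  qed
qed

lemma chrono_runs:
  assumes "chronological g X Y" "R \<in> runs X"
  shows "fbar g R \<in> runs Y" "pre (fbar g R) n = g (pre R n)"
proof -
  have X: "\<forall>n. pre R n \<in> X" using assms by (simp add: runs_iff)
  show "pre (fbar g R) n = g (pre R n)" for n using chrono_pre[OF assms(1) X] .
  then show "fbar g R \<in> runs Y" using assms X by (auto simp: runs_iff chronological_def)
qed

lemma fbar_alt: "fbar g R n = g (pre R (Suc n)) ! n"
  by (simp add: fbar_def pre_def)

lemma fbar_cong: "(\<And>n. g (pre R n) = g' (pre R n)) \<Longrightarrow> fbar g R = fbar g' R"
  by (simp add: fbar_alt fun_eq_iff)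

lemma fbar_map: "fbar (map h) R = h \<circ> R"
  by (auto simp: fbar_alt fun_eq_iff pre_def nth_append)

lemma fbar_id_on: "(\<And>n. g (pre R n) = pre R n) \<Longrightarrow> fbar g R = R"
  by (auto simp: fbar_alt fun_eq_iff)

lemma fbar_pre_on: "(\<And>n. g (pre R n) = pre S n) \<Longrightarrow> fbar g R = S"
  by (auto simp: fbar_alt fun_eq_iff)

lemma emb_restrict:
  assumes "game_emb h D AD Y AY" "C \<subseteq> D" "AC = AD \<inter> runs C"
  shows "game_emb h C AC Y AY"
  using assms runs_mono[OF assms(2)]
  unfolding game_emb_def chronological_def by (auto intro: inj_on_subset)

lemma emb_comp:
  assumes "game_emb g X AX Y AY" "game_emb h Y AY Z AZ"
  shows "game_emb (h \<circ> g) X AX Z AZ"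
proof -
  have cg: "chronological g X Y" and ch: "chronological h Y Z"
    using assms by (auto simp: game_emb_def)
  have c: "chronological (h \<circ> g) X Z"
    using cg ch unfolding chronological_def by (auto simp: image_subset_iff)
  have inj: "inj_on (h \<circ> g) X"
    using assms unfolding game_emb_def chronological_def by (auto intro: comp_inj_on inj_on_subset)
  have comp: "fbar (h \<circ> g) R = fbar h (fbar g R)" if "R \<in> runs X" for R
  proof (rule fbar_pre_on)
    fix n
    have "(h \<circ> g) (pre R n) = h (pre (fbar g R) n)" using chrono_runs[OF cg that] by simp
    also have "\<dots> = pre (fbar h (fbar g R)) n" using chrono_runs[OF ch chrono_runs(1)[OF cg that]] by simp
    finally show "(h \<circ> g) (pre R n) = pre (fbar h (fbar g R)) n" .
  qed
  have gr: "fbar g R \<in> runs Y" if "R \<in> runs X" for R using chrono_runs[OF cg that] by simp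
  show ?thesis unfolding game_emb_def
  proof (intro conjI c inj ballI)
    fix R assume R: "R \<in> runs X"
    have "fbar g R \<in> AY \<longleftrightarrow> R \<in> AX" using assms(1) R by (simp add: game_emb_def)
    moreover have "fbar h (fbar g R) \<in> AZ \<longleftrightarrow> fbar g R \<in> AY"
      using assms(2) gr[OF R] by (simp add: game_emb_def)
    ultimately show "fbar (h \<circ> g) R \<in> AZ \<longleftrightarrow> R \<in> AX" using comp[OF R] by simp
  qed
qed

lemma emb_cong:
  assumes "game_emb f X AX Y AY" "\<And>t. t \<in> X \<Longrightarrow> f t = f' t" "tclosed X"
  shows "game_emb f' X AX Y AY"
proof -
  have "fbar f R = fbar f' R" if "R \<in> runs X" for R
    using that assms(2) by (intro fbar_cong) (auto simp: runs_iff)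
  moreover have "chronological f' X Y" using assms(1,3) unfolding game_emb_def chronological_def tclosed_def
    by (auto simp: assms(2)[symmetric])
  moreover have "inj_on f' X" using assms(1) unfolding game_emb_def
    by (metis assms(2) inj_on_cong)
  ultimately show ?thesis using assms(1) unfolding game_emb_def by auto
qed

lemma runs_empty[simp]: "runs {} = {}"
  by (auto simp: runs_iff)

lemma tclosed_Un: "tclosed X \<Longrightarrow> tclosed Y \<Longrightarrow> tclosed (X \<union> Y)"
  unfolding tclosed_def by blast

lemma tclosed_UN: "(\<And>i. i \<in> I \<Longrightarrow> tclosed (X i)) \<Longrightarrow> tclosed (\<Union>i\<in>I. X i)"
  unfolding tclosed_def by blast

lemma game_tree_UN:
  assumes "\<And>i. i \<in> I \<Longrightarrow> game_tree (X i)"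
  shows "game_tree (\<Union>i\<in>I. X i)"
  unfolding game_tree_def
proof (intro conjI ballI allI)
  fix t k assume "t \<in> (\<Union>i\<in>I. X i)"
  then obtain i where i: "i \<in> I" "t \<in> X i" by blast
  then have "take k t \<in> X i" using assms[OF i(1)] unfolding game_tree_def by blast
  then show "take k t \<in> (\<Union>i\<in>I. X i)" using i by blast
next
  fix t assume "t \<in> (\<Union>i\<in>I. X i)"
  then obtain i where i: "i \<in> I" "t \<in> X i" by blast
  then obtain x where "t @ [x] \<in> X i" using assms[OF i(1)] unfolding game_tree_def by blast
  then show "\<exists>x. t @ [x] \<in> (\<Union>i\<in>I. X i)" using i by blast
qed

lemma runs_UN:
  assumes "finite I" "\<And>i. i \<in> I \<Longrightarrow> tclosed (X i)"
  shows "runs (\<Union>i\<in>I. X i) = (\<Union>i\<in>I. runs (X i))"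
  using assms
proof (induction I rule: finite_induct)
  case empty then show ?case by simp
next
  case (insert x F)
  have "runs (\<Union>i\<in>insert x F. X i) = runs (X x \<union> (\<Union>i\<in>F. X i))" by simp
  also have "\<dots> = runs (X x) \<union> runs (\<Union>i\<in>F. X i)"
    using insert by (intro runs_Un tclosed_UN) auto
  finally show ?case using insert by simp
qed

lemma emb_id:
  assumes "C \<subseteq> D" "AC = AD \<inter> runs C"
  shows "game_emb id C AC D AD"
proof -
  have fid: "fbar id R = R" for R by (rule fbar_id_on) simp
  show ?thesis using assms unfolding game_emb_def chronological_def by (auto simp: fid)
qed

lemma ext_lemma:
  fixes C D :: "nat list set"
  assumes "injective_fin T2 A2" "finite_game C AC" "finite_game D AD" "C \<subseteq> D"
    "AC = AD \<inter> runs C" "game_emb f C AC T2 A2"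
  shows "\<exists>h. game_emb h D AD T2 A2 \<and> (\<forall>t\<in>C. h t = f t)"
proof -
  have "game_emb id C AC D AD" using emb_id assms by blast
  then show ?thesis using assms(1) unfolding injective_fin_def
    using assms(2,3,6) by fastforce
qed

lemma tclosed_pre_iff_least:
  assumes "tclosed C" "pre R j0 \<notin> C" "\<And>j. j < j0 \<Longrightarrow> pre R j \<in> C"
  shows "pre R j \<in> C \<longleftrightarrow> j < j0"
  using assms tclosed_pre[OF assms(1)] by (metis not_le)

lemma step_avoid:
  fixes T1 :: "nat list set" and T2 :: "'b list set" and B :: "(nat \<Rightarrow> 'b) set"
  assumes inj2: "injective_fin T2 A2" and gT1: "game T1 A1"
    and ev: "\<forall>t\<in>T1. \<forall>x\<in>set t. even x"
    and fg: "finite_game C (A1 \<inter> runs C)" and CT: "C \<subseteq> T1" and Cne: "C \<noteq> {}"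
    and emb: "game_emb f C (A1 \<inter> runs C) T2 A2" and rho: "\<rho> \<in> runs T1" and fin: "finite B"
  shows "\<exists>f'. game_emb f' (C \<union> pref \<rho>) (A1 \<inter> runs (C \<union> pref \<rho>)) T2 A2 \<and> (\<forall>t\<in>C. f' t = f t) \<and>
     (\<forall>t \<in> pref \<rho> - C. butlast t \<in> C \<longrightarrow> (\<forall>S\<in>B. f' t \<noteq> pre S (length t)))"
proof (cases "\<rho> \<in> runs C")
  case True
  then have "pref \<rho> \<subseteq> C" by (auto simp: pref_def runs_iff)
  then have "C \<union> pref \<rho> = C" by blast
  then show ?thesis using emb by auto
next
  case False
  have tcC: "tclosed C" using fg by (simp add: finite_game_def game_def game_tree_tclosed)
  have gtC: "game_tree C" using fg by (simp add: finite_game_def game_def)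
  have NilC: "[] \<in> C" using tclosed_Nil[OF tcC Cne] .
  from False obtain j where "pre \<rho> j \<notin> C" by (auto simp: runs_iff)
  define j0 where "j0 = (LEAST j. pre \<rho> j \<notin> C)"
  have j0: "pre \<rho> j0 \<notin> C" unfolding j0_def by (rule LeastI) fact
  have "pre \<rho> j \<in> C" if "j < j0" for j using not_less_Least[OF that[unfolded j0_def]] by blast
  then have inC: "pre \<rho> j \<in> C \<longleftrightarrow> j < j0" for j using tclosed_pre_iff_least[OF tcC j0] by blast
  have "j0 \<noteq> 0" using j0 NilC by (metis pre_0)
  then obtain m where j0m: "j0 = Suc m" by (cases j0) auto
  define N where "N = card B"
  define rc where "rc i = \<rho>(m := 2*i+1)" for i :: nat
  have pre_rc_le: "pre (rc i) j = pre \<rho> j" if "j \<le> m" for i j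
    using that by (auto simp: pre_eq_iff rc_def)
  have pre_rc_gt: "pre (rc i) j \<notin> C" if "m < j" for i j
  proof
    assume "pre (rc i) j \<in> C"
    then have "\<forall>x\<in>set (pre (rc i) j). even x" using CT ev by blast
    moreover have "rc i m \<in> set (pre (rc i) j)" using that by (auto simp: set_pre)
    ultimately have "even (rc i m)" by blast
    then show False by (simp add: rc_def)
  qed
  have rc_notC: "rc i \<notin> runs C" for i using pre_rc_gt[where i=i and j="Suc m"] unfolding runs_iff by blast
  define D where "D = C \<union> (\<Union>i\<in>{..N}. pref (rc i))"
  define AD where "AD = A1 \<inter> runs C \<union> (if \<rho> \<in> A1 then rc ` {..N} else {})"
  have runsD: "runs D = runs C \<union> rc ` {..N}"
  proof -
    have "runs D = runs C \<union> runs (\<Union>i\<in>{..N}. pref (rc i))"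
      unfolding D_def by (intro runs_Un tcC tclosed_UN tclosed_pref)
    also have "\<dots> = runs C \<union> rc ` {..N}" by (subst runs_UN) (auto simp: tclosed_pref runs_pref)
    finally show ?thesis .
  qed
  have fgD: "finite_game D AD"
  proof -
    have "game_tree D" unfolding D_def by (intro game_tree_Un gtC game_tree_UN game_tree_pref)
    moreover have "AD \<subseteq> runs D" unfolding runsD AD_def by auto
    moreover have "finite (runs D)" unfolding runsD using fg by (simp add: finite_game_def)
    ultimately show ?thesis by (simp add: finite_game_def game_def)
  qed
  have CD: "C \<subseteq> D" by (simp add: D_def)
  have ACD: "A1 \<inter> runs C = AD \<inter> runs C" using rc_notC by (auto simp: AD_def)
  obtain h where h: "game_emb h D AD T2 A2" and hC: "\<forall>t\<in>C. h t = f t"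
    using ext_lemma[OF inj2 fg fgD CD ACD emb] by blast
  define c where "c i = pre (rc i) (Suc m)" for i
  have cD: "c i \<in> D" if "i \<le> N" for i using that by (auto simp: D_def c_def pref_def)
  have c_inj: "inj c" unfolding inj_def c_def
  proof (intro allI impI)
    fix x y assume "pre (rc x) (Suc m) = pre (rc y) (Suc m)"
    then have "rc x m = rc y m" by (auto simp: pre_eq_iff)
    then show "x = y" by (simp add: rc_def)
  qed
  have injh: "inj_on h D" using h by (simp add: game_emb_def)
  define Bad where "Bad = (\<lambda>S. pre S (Suc m)) ` B"
  have "card ((h \<circ> c) ` {..N}) = Suc N"
  proof -
    have "inj_on (h \<circ> c) {..N}"
      using injh c_inj cD by (intro comp_inj_on) (auto intro: inj_on_subset simp: inj_on_def)
    then show ?thesis by (metis card_image card_atMost)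
  qed
  moreover have "card Bad \<le> N" unfolding Bad_def N_def using fin by (rule card_image_le)
  ultimately have "\<not> (h \<circ> c) ` {..N} \<subseteq> Bad"
    using fin card_mono[of Bad "(h \<circ> c) ` {..N}"] unfolding Bad_def by force
  then obtain i where iN: "i \<le> N" and hci: "h (c i) \<notin> Bad" by auto
  define \<psi> where "\<psi> t = (if t \<in> C then t else pre (rc i) (length t))" for t
  have psiC: "\<psi> t = t" if "t \<in> C" for t using that by (simp add: \<psi>_def)
  have psipre: "\<psi> (pre \<rho> j) = pre (rc i) j" for j
    using inC[of j] pre_rc_le[of j i] j0m by (auto simp: \<psi>_def)
  have runsCr: "runs (C \<union> pref \<rho>) = runs C \<union> {\<rho>}"
    by (simp add: runs_Un tcC tclosed_pref runs_pref)
  have psi_emb: "game_emb \<psi> (C \<union> pref \<rho>) (A1 \<inter> runs (C \<union> pref \<rho>)) D AD"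
  proof -
    have ch: "chronological \<psi> (C \<union> pref \<rho>) D"
      unfolding chronological_def
    proof (intro conjI ballI allI)
      show "\<psi> ` (C \<union> pref \<rho>) \<subseteq> D"
        using CD iN by (auto simp: psiC psipre pref_def D_def)
    next
      fix t assume "t \<in> C \<union> pref \<rho>"
      then show "length (\<psi> t) = length t" by (auto simp: psiC psipre pref_def)
    next
      fix t k assume "t \<in> C \<union> pref \<rho>"
      then show "\<psi> (take k t) = take k (\<psi> t)"
      proof
        assume "t \<in> C"
        then show ?thesis using tcC by (simp add: psiC tclosed_def)
      next
        assume "t \<in> pref \<rho>"
        then obtain j where "t = pre \<rho> j" by (auto simp: pref_def)
        then show ?thesis by (simp add: psipre)
      qed
    qed
    have inj: "inj_on \<psi> (C \<union> pref \<rho>)"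
    proof (rule inj_onI)
      fix s t assume s: "s \<in> C \<union> pref \<rho>" and t: "t \<in> C \<union> pref \<rho>" and eq: "\<psi> s = \<psi> t"
      have key: "u \<notin> C \<Longrightarrow> u \<in> pref \<rho> \<Longrightarrow> \<psi> u \<notin> C \<and> u = pre \<rho> (length u)" for u
      proof -
        assume "u \<notin> C" "u \<in> pref \<rho>"
        then obtain j where u: "u = pre \<rho> j" and "\<not> j < j0" using inC by (auto simp: pref_def)
        then show ?thesis using pre_rc_gt[of j i] j0m by (simp add: psipre)
      qed
      show "s = t"
      proof (cases "s \<in> C"; cases "t \<in> C")
        assume "s \<in> C" "t \<in> C" then show ?thesis using eq by (simp add: psiC)
      next
        assume "s \<in> C" "t \<notin> C" then show ?thesis using eq key[of t] t by (simp add: psiC)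
      next
        assume "s \<notin> C" "t \<in> C" then show ?thesis using eq key[of s] s by (simp add: psiC)
      next
        assume "s \<notin> C" "t \<notin> C"
        then have "pre (rc i) (length s) = pre (rc i) (length t)" using eq by (simp add: \<psi>_def)
        then have "length s = length t" by (rule pre_inj)
        then show ?thesis using key[of s] key[of t] s t \<open>s \<notin> C\<close> \<open>t \<notin> C\<close> by auto
      qed
    qed
    have rr: "fbar \<psi> R \<in> AD \<longleftrightarrow> R \<in> A1 \<inter> runs (C \<union> pref \<rho>)" if "R \<in> runs (C \<union> pref \<rho>)" for R
    proof -
      from that have "R \<in> runs C \<or> R = \<rho>" unfolding runsCr by blast
      then show ?thesis
      proof
        assume RC: "R \<in> runs C"
        then have "fbar \<psi> R = R" by (intro fbar_id_on) (simp add: psiC runs_iff)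
        then show ?thesis using RC that rc_notC by (auto simp: AD_def)
      next
        assume "R = \<rho>"
        moreover have "fbar \<psi> \<rho> = rc i" by (intro fbar_pre_on) (simp add: psipre)
        ultimately show ?thesis using that rc_notC iN by (auto simp: AD_def)
      qed
    qed
    show ?thesis using ch inj rr by (simp add: game_emb_def)
  qed
  define f' where "f' = h \<circ> \<psi>"
  have "game_emb f' (C \<union> pref \<rho>) (A1 \<inter> runs (C \<union> pref \<rho>)) T2 A2"
    unfolding f'_def by (rule emb_comp[OF psi_emb h])
  moreover have "\<forall>t\<in>C. f' t = f t" using hC by (simp add: f'_def psiC)
  moreover have "\<forall>S\<in>B. f' t \<noteq> pre S (length t)" if "t \<in> pref \<rho> - C" "butlast t \<in> C" for t
  proof -
    from that obtain j where t: "t = pre \<rho> j" and "\<not> j < j0" using inC by (auto simp: pref_def)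
    moreover have "j - 1 < j0" using that(2) inC[of "j - 1"] by (simp add: t butlast_pre)
    ultimately have "j = Suc m" using j0m by auto
    then have "f' t = h (c i)" by (simp add: f'_def t psipre c_def)
    then show ?thesis using hci t \<open>j = Suc m\<close> by (auto simp: Bad_def)
  qed
  ultimately show ?thesis by blast
qed

lemma step_plain:
  fixes T1 :: "nat list set" and T2 :: "'b list set"
  assumes inj2: "injective_fin T2 A2"
    and fg: "finite_game C (A1 \<inter> runs C)"
    and emb: "game_emb f C (A1 \<inter> runs C) T2 A2" and rho: "\<rho> \<in> runs T1"
  shows "\<exists>f'. game_emb f' (C \<union> pref \<rho>) (A1 \<inter> runs (C \<union> pref \<rho>)) T2 A2 \<and> (\<forall>t\<in>C. f' t = f t)"
proof -
  have tcC: "tclosed C" using fg by (simp add: finite_game_def game_def game_tree_tclosed)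
  have gtC: "game_tree C" using fg by (simp add: finite_game_def game_def)
  have rD: "runs (C \<union> pref \<rho>) = runs C \<union> {\<rho>}"
    by (simp add: runs_Un tcC tclosed_pref runs_pref)
  have "finite_game (C \<union> pref \<rho>) (A1 \<inter> runs (C \<union> pref \<rho>))"
    using fg gtC game_tree_pref unfolding finite_game_def game_def rD
    by (auto intro: game_tree_Un)
  moreover have "A1 \<inter> runs C = A1 \<inter> runs (C \<union> pref \<rho>) \<inter> runs C" using rD by auto
  ultimately show ?thesis using ext_lemma[OF inj2 fg _ _ _ emb] by blast
qed

lemma fg_union:
  assumes "finite_game C (A1 \<inter> runs C)"
  shows "finite_game (C \<union> pref \<rho>) (A1 \<inter> runs (C \<union> pref \<rho>))"
proof -
  have tcC: "tclosed C" using assms by (simp add: finite_game_def game_def game_tree_tclosed)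
  have rD: "runs (C \<union> pref \<rho>) = runs C \<union> {\<rho>}"
    by (simp add: runs_Un tcC tclosed_pref runs_pref)
  show ?thesis
    using assms game_tree_pref unfolding finite_game_def game_def rD
    by (auto intro: game_tree_Un)
qed

lemma pref_sub: "\<rho> \<in> runs T1 \<Longrightarrow> pref \<rho> \<subseteq> T1"
  by (auto simp: pref_def runs_iff)

lemma core:
  fixes T1 :: "nat list set" and T2 :: "'b list set"
  assumes gT1: "game T1 A1" and ev: "\<forall>t\<in>T1. \<forall>x\<in>set t. even x"
    and cA1: "countable A1" and cA2: "countable A2" and inj2: "injective_fin T2 A2"
    and fgT: "finite_game T A" and sub: "subgame T A T1 A1" and emb: "game_emb f T A T2 A2"
  shows "\<exists>f'. game_emb f' T1 A1 T2 A2 \<and> (\<forall>t\<in>T. f' t = f t)"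
proof (cases "T1 = {}")
  case True
  then have "T = {}" "A1 = {}" using sub gT1 by (auto simp: subgame_def game_def)
  then show ?thesis using emb sub True by (auto simp: subgame_def)
next
  case False
  have gt1: "game_tree T1" and A1r: "A1 \<subseteq> runs T1" using gT1 by (auto simp: game_def)
  have tc1: "tclosed T1" using gt1 by (rule game_tree_tclosed)
  have AT: "A = A1 \<inter> runs T" and TT1: "T \<subseteq> T1" using sub by (auto simp: subgame_def)
  define rt where "rt t = (SOME R. R \<in> runs T1 \<and> pre R (length t) = t)" for t
  have rt: "rt t \<in> runs T1 \<and> pre (rt t) (length t) = t" if "t \<in> T1" for t
  proof -
    have "\<exists>R. R \<in> runs T1 \<and> pre R (length t) = t" using node_to_run[OF gt1 that] by blast
    then show ?thesis unfolding rt_def by (rule someI_ex)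
  qed
  define Q where "Q = A1 \<union> rt ` T1"
  have Qne: "Q \<noteq> {}" using False by (auto simp: Q_def)
  have cT1: "countable T1" by (rule countable_subset[OF subset_UNIV]) simp
  have cQ: "countable Q" unfolding Q_def using cA1 cT1 by simp
  have Qr: "Q \<subseteq> runs T1" using A1r rt by (auto simp: Q_def)
  define \<rho> where "\<rho> = from_nat_into Q"
  have rangeQ: "range \<rho> = Q" unfolding \<rho>_def using range_from_nat_into[OF Qne cQ] .
  have rho_runs: "\<rho> n \<in> runs T1" for n using rangeQ Qr by auto
  define Bs where "Bs n = (if A2 = {} then {} else from_nat_into A2 ` {..<n})" for n
  have finBs: "finite (Bs n)" for n by (simp add: Bs_def)
  define Inv where "Inv C g \<longleftrightarrow> finite_game C (A1 \<inter> runs C) \<and> C \<subseteq> T1 \<and> C \<noteq> {} \<and>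
      game_emb g C (A1 \<inter> runs C) T2 A2" for C g
  define GS where "GS n C g g' \<longleftrightarrow> game_emb g' (C \<union> pref (\<rho> n)) (A1 \<inter> runs (C \<union> pref (\<rho> n))) T2 A2 \<and>
      (\<forall>t\<in>C. g' t = g t) \<and>
      (\<forall>t \<in> pref (\<rho> n) - C. butlast t \<in> C \<longrightarrow> (\<forall>S\<in>Bs n. g' t \<noteq> pre S (length t)))" for n C g g'
  have GS_ex: "\<exists>g'. GS n C g g'" if "Inv C g" for n C g
  proof -
    have i1: "finite_game C (A1 \<inter> runs C)" and i2: "C \<subseteq> T1" and i3: "C \<noteq> {}"
      and i4: "game_emb g C (A1 \<inter> runs C) T2 A2"
      using that unfolding Inv_def by simp_all
    show ?thesis unfolding GS_def
      by (rule step_avoid[OF inj2 gT1 ev i1 i2 i3 i4 rho_runs[of n] finBs[of n]])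
  qed
  have GS_Inv: "Inv (C \<union> pref (\<rho> n)) g'" if "Inv C g" "GS n C g g'" for n C g g'
  proof -
    have i1: "finite_game C (A1 \<inter> runs C)" and i2: "C \<subseteq> T1"
      using that unfolding Inv_def by simp_all
    have e: "game_emb g' (C \<union> pref (\<rho> n)) (A1 \<inter> runs (C \<union> pref (\<rho> n))) T2 A2"
      using that(2) unfolding GS_def by simp
    have "C \<union> pref (\<rho> n) \<subseteq> T1" using i2 pref_sub[OF rho_runs[of n]] by simp
    moreover have "C \<union> pref (\<rho> n) \<noteq> {}" by (simp add: pref_def)
    ultimately show ?thesis using fg_union[OF i1] e unfolding Inv_def by simp
  qed
  define C0 where "C0 = T \<union> pref (\<rho> 0)"
  define g0 where "g0 = (SOME g. game_emb g C0 (A1 \<inter> runs C0) T2 A2 \<and> (\<forall>t\<in>T. g t = f t))"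
  have "\<exists>g. game_emb g C0 (A1 \<inter> runs C0) T2 A2 \<and> (\<forall>t\<in>T. g t = f t)"
    unfolding C0_def using step_plain[OF inj2 fgT[unfolded AT] emb[unfolded AT] rho_runs[of 0]] .
  then have g0: "game_emb g0 C0 (A1 \<inter> runs C0) T2 A2 \<and> (\<forall>t\<in>T. g0 t = f t)"
    unfolding g0_def by (rule someI_ex)
  have Inv0: "Inv C0 g0"
    using g0 fg_union[OF fgT[unfolded AT]] TT1 pref_sub[OF rho_runs[of 0]]
    unfolding Inv_def C0_def by (auto simp: pref_def)
  define st where "st n = rec_nat (C0, g0) (\<lambda>n p. (fst p \<union> pref (\<rho> n), SOME g'. GS n (fst p) (snd p) g')) n" for n
  define Cs where "Cs n = fst (st n)" for n
  define gs where "gs n = snd (st n)" for n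
  have Cs0: "Cs 0 = C0" and gs0: "gs 0 = g0" by (simp_all add: Cs_def gs_def st_def)
  have CsS: "Cs (Suc n) = Cs n \<union> pref (\<rho> n)" for n by (simp add: Cs_def st_def)
  have gsS: "gs (Suc n) = (SOME g'. GS n (Cs n) (gs n) g')" for n by (simp add: Cs_def gs_def st_def)
  have InvN: "Inv (Cs n) (gs n)" for n
  proof (induction n)
    case 0 then show ?case using Inv0 by (simp add: Cs0 gs0)
  next
    case (Suc n)
    have "GS n (Cs n) (gs n) (gs (Suc n))" unfolding gsS by (rule someI_ex[OF GS_ex[OF Suc]])
    then show ?case using GS_Inv[OF Suc] by (simp add: CsS)
  qed
  have GSN: "GS n (Cs n) (gs n) (gs (Suc n))" for n
    unfolding gsS by (rule someI_ex[OF GS_ex[OF InvN]])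
  have mono: "Cs n \<subseteq> Cs k \<and> (\<forall>t\<in>Cs n. gs k t = gs n t)" if "n \<le> k" for n k
    using that
  proof (induction k rule: dec_induct)
    case base then show ?case by simp
  next
    case (step k)
    then show ?case using GSN[of k] by (auto simp: CsS GS_def)
  qed
  define F where "F t = gs (LEAST n. t \<in> Cs n) t" for t
  have F_eq: "F t = gs n t" if "t \<in> Cs n" for t n
  proof -
    let ?n0 = "LEAST n. t \<in> Cs n"
    have "t \<in> Cs ?n0" using that by (rule LeastI)
    moreover have "?n0 \<le> n" using that by (rule Least_le)
    ultimately show ?thesis using mono[of ?n0 n] by (simp add: F_def)
  qed
  have cover: "\<exists>n. t \<in> Cs n" if "t \<in> T1" for t
  proof -
    have "rt t \<in> range \<rho>" using that rangeQ by (auto simp: Q_def)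
    then obtain n where "rt t = \<rho> n" by auto
    then have "t \<in> pref (\<rho> n)" using rt[OF that] unfolding pref_def by (metis rangeI)
    then have "t \<in> Cs (Suc n)" by (simp add: CsS)
    then show ?thesis by blast
  qed
  have coverA: "\<exists>n. R \<in> runs (Cs n)" if "R \<in> A1" for R
  proof -
    have "R \<in> range \<rho>" using that rangeQ by (auto simp: Q_def)
    then obtain n where "R = \<rho> n" by auto
    then have "R \<in> runs (Cs (Suc n))" using runs_mono[of "pref (\<rho> n)" "Cs (Suc n)"]
      by (auto simp: CsS runs_pref)
    then show ?thesis by blast
  qed
  have CsT1: "Cs n \<subseteq> T1" for n using InvN by (simp add: Inv_def)
  have tcCs: "tclosed (Cs n)" for n using InvN
    by (simp add: Inv_def finite_game_def game_def game_tree_tclosed)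
  have embN: "game_emb (gs n) (Cs n) (A1 \<inter> runs (Cs n)) T2 A2" for n using InvN by (simp add: Inv_def)
  have chF: "chronological F T1 T2"
    unfolding chronological_def
  proof (intro conjI ballI allI)
    show "F ` T1 \<subseteq> T2"
    proof
      fix u assume "u \<in> F ` T1"
      then obtain t where t: "t \<in> T1" "u = F t" by auto
      then obtain n where n: "t \<in> Cs n" using cover by blast
      then show "u \<in> T2" using embN[of n] t F_eq[OF n] by (auto simp: game_emb_def chronological_def)
    qed
  next
    fix t assume "t \<in> T1"
    then obtain n where n: "t \<in> Cs n" using cover by blast
    then show "length (F t) = length t" using embN[of n] F_eq[OF n] by (auto simp: game_emb_def chronological_def)
  next
    fix t k assume "t \<in> T1"
    then obtain n where n: "t \<in> Cs n" using cover by blast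
    moreover have "take k t \<in> Cs n" using n tcCs[of n] by (simp add: tclosed_def)
    ultimately show "F (take k t) = take k (F t)"
      using embN[of n] F_eq by (auto simp: game_emb_def chronological_def)
  qed
  have injF: "inj_on F T1"
  proof (rule inj_onI)
    fix s t assume "s \<in> T1" "t \<in> T1" and eq: "F s = F t"
    then obtain a b where a: "s \<in> Cs a" and b: "t \<in> Cs b" using cover by blast
    then have "s \<in> Cs (max a b)" "t \<in> Cs (max a b)" using mono[of a "max a b"] mono[of b "max a b"] by auto
    then show "s = t" using eq F_eq embN[of "max a b"] by (auto simp: game_emb_def inj_on_def)
  qed
  have runsF: "fbar F R \<in> A2 \<longleftrightarrow> R \<in> A1" if R: "R \<in> runs T1" for R
  proof (cases "\<exists>n. R \<in> runs (Cs n)")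
    case True
    then obtain n where n: "R \<in> runs (Cs n)" by blast
    have "fbar F R = fbar (gs n) R" using n by (intro fbar_cong) (simp add: F_eq runs_iff)
    then show ?thesis using embN[of n] n by (auto simp: game_emb_def)
  next
    case False
    then have "R \<notin> A1" using coverA by blast
    moreover have "fbar F R \<notin> A2"
    proof
      assume FA: "fbar F R \<in> A2"
      then have A2ne: "A2 \<noteq> {}" by blast
      obtain k where k: "from_nat_into A2 k = fbar F R" using from_nat_into_surj[OF cA2 FA] by blast
      define K where "K = Suc k"
      from False obtain j where "pre R j \<notin> Cs K" by (auto simp: runs_iff)
      define j0 where "j0 = (LEAST j. pre R j \<notin> Cs K)"
      have j0: "pre R j0 \<notin> Cs K" unfolding j0_def by (rule LeastI) fact
      have "Cs K \<noteq> {}" using InvN by (simp add: Inv_def)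
      then have "[] \<in> Cs K" using tclosed_Nil tcCs by blast
      then have "j0 \<noteq> 0" using j0 by (metis pre_0)
      have prevK: "pre R (j0 - 1) \<in> Cs K"
        using not_less_Least[of "j0 - 1" "\<lambda>j. pre R j \<notin> Cs K"] \<open>j0 \<noteq> 0\<close> unfolding j0_def[symmetric] by auto
      have "pre R j0 \<in> T1" using R by (simp add: runs_iff)
      then obtain n where "pre R j0 \<in> Cs n" using cover by blast
      define n1 where "n1 = (LEAST n. pre R j0 \<in> Cs n)"
      have n1: "pre R j0 \<in> Cs n1" unfolding n1_def by (rule LeastI) fact
      have "\<not> n1 \<le> K" using n1 j0 mono[of n1 K] by auto
      then obtain n2 where n2: "n1 = Suc n2" and Kn2: "K \<le> n2" by (cases n1) auto
      have "pre R j0 \<notin> Cs n2" using not_less_Least[of n2 "\<lambda>n. pre R j0 \<in> Cs n"] n2 unfolding n1_def by auto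
      then have inpref: "pre R j0 \<in> pref (\<rho> n2) - Cs n2" using n1 n2 by (simp add: CsS)
      have "butlast (pre R j0) \<in> Cs n2" using prevK mono[OF Kn2] by (auto simp: butlast_pre)
      then have "\<forall>S\<in>Bs n2. gs (Suc n2) (pre R j0) \<noteq> pre S (length (pre R j0))"
        using GSN[of n2] inpref unfolding GS_def by blast
      then have avoid: "\<forall>S\<in>Bs n2. gs (Suc n2) (pre R j0) \<noteq> pre S j0" by simp
      have "from_nat_into A2 k \<in> Bs n2" using A2ne Kn2 by (simp add: Bs_def K_def)
      moreover have "gs (Suc n2) (pre R j0) = pre (fbar F R) j0"
        using F_eq[of "pre R j0" "Suc n2"] n1 n2 chrono_runs(2)[OF chF R] by simp
      ultimately show False using avoid k by auto
    qed
    ultimately show ?thesis by blast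
  qed
  have "game_emb F T1 A1 T2 A2" using chF injF runsF by (simp add: game_emb_def)
  moreover have "\<forall>t\<in>T. F t = f t"
    using F_eq[of _ 0] g0 by (simp add: Cs0 gs0 C0_def)
  ultimately show ?thesis by blast
qed

theorem mainTheorem4:
  fixes T1 :: "'a list set" and A1 :: "(nat \<Rightarrow> 'a) set"
    and T2 :: "'b list set" and A2 :: "(nat \<Rightarrow> 'b) set"
    and T :: "'a list set" and A :: "(nat \<Rightarrow> 'a) set"
    and f :: "'a list \<Rightarrow> 'b list"
  assumes "game T1 A1" and "game T2 A2"
    and "countable T1" and "countable T2" and "countable A1" and "countable A2"
    and "injective_fin T2 A2"
    and "finite_game T A" and "subgame T A T1 A1"
    and "game_emb f T A T2 A2"
  shows "\<exists>f'. game_emb f' T1 A1 T2 A2 \<and> (\<forall>t\<in>T. f' t = f t)"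
proof -
  note gT1 = assms(1) and cT1 = assms(3) and cA1 = assms(5) and cA2 = assms(6)
    and inj2 = assms(7) and fgT = assms(8) and sub = assms(9) and emb = assms(10)
  have gt1: "game_tree T1" and A1r: "A1 \<subseteq> runs T1" using gT1 by (auto simp: game_def)
  have AT: "A = A1 \<inter> runs T" and TT1: "T \<subseteq> T1" using sub by (auto simp: subgame_def)
  have gtT: "game_tree T" and Ar: "A \<subseteq> runs T" and finT: "finite (runs T)"
    using fgT by (auto simp: finite_game_def game_def)
  define M where "M = (\<Union>t\<in>T1. set t)"
  have cM: "countable M" unfolding M_def using cT1 by (intro countable_UN) (auto intro: countable_finite)
  define enc where "enc x = 2 * to_nat_on M x" for x
  have inj_enc: "inj_on enc M" using inj_on_to_nat_on[OF cM] by (auto simp: inj_on_def enc_def)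
  define dec where "dec = inv_into M enc"
  have dec_enc: "dec (enc x) = x" if "x \<in> M" for x using inj_enc that by (simp add: dec_def)
  define E where "E = map enc"
  define Dm where "Dm = map dec"
  define EC where "EC R = enc \<circ> R" for R :: "nat \<Rightarrow> 'a"
  have setM: "set t \<subseteq> M" if "t \<in> T1" for t using that by (auto simp: M_def)
  have DE: "Dm (E t) = t" if "t \<in> T1" for t
    unfolding Dm_def E_def map_map by (rule map_idI) (use setM[OF that] dec_enc in auto)
  have runM: "R i \<in> M" if "R \<in> runs T1" for R i
  proof -
    have "pre R (Suc i) \<in> T1" using that by (simp add: runs_iff)
    then show ?thesis using setM by (force simp: set_pre)
  qed
  have decEC: "dec \<circ> EC R = R" if "R \<in> runs T1" for R
    using runM[OF that] dec_enc by (auto simp: EC_def)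
  have inj_EC: "inj_on EC (runs T1)"
    by (rule inj_onI) (metis decEC)
  have runsE: "runs (E ` X) = EC ` runs X" if "X \<subseteq> T1" for X
  proof
    show "EC ` runs X \<subseteq> runs (E ` X)"
      by (auto simp: runs_iff EC_def pre_map E_def)
  next
    show "runs (E ` X) \<subseteq> EC ` runs X"
    proof
      fix R' assume R': "R' \<in> runs (E ` X)"
      have ex: "\<exists>t\<in>X. pre R' n = E t" for n using R' by (auto simp: runs_iff)
      have encM: "R' i \<in> enc ` M" for i
      proof -
        obtain t where t: "t \<in> X" "pre R' (Suc i) = E t" using ex by blast
        have "R' i \<in> set (pre R' (Suc i))" by (auto simp: set_pre)
        then show ?thesis using t setM that by (auto simp: E_def)
      qed
      define R where "R = dec \<circ> R'"
      have "EC R = R'" using encM by (auto simp: EC_def R_def dec_def f_inv_into_f)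
      moreover have "R \<in> runs X"
      proof -
        have "pre R n \<in> X" for n
        proof -
          obtain t where t: "t \<in> X" "pre R' n = E t" using ex by blast
          have "pre R n = Dm (pre R' n)" by (simp add: R_def pre_map Dm_def)
          then show ?thesis using t DE that by auto
        qed
        then show ?thesis by (simp add: runs_iff)
      qed
      ultimately show "R' \<in> EC ` runs X" by blast
    qed
  qed
  have gtE: "game_tree (E ` X)" if gX: "game_tree X" for X
    unfolding game_tree_def
  proof (intro conjI ballI allI)
    fix t k assume "t \<in> E ` X"
    then obtain u where u: "u \<in> X" "t = E u" by blast
    then have "take k u \<in> X" using gX unfolding game_tree_def by blast
    then show "take k t \<in> E ` X" using u by (auto simp: E_def take_map)
  next
    fix t assume "t \<in> E ` X"
    then obtain u where u: "u \<in> X" "t = E u" by blast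
    then obtain x where "u @ [x] \<in> X" using gX unfolding game_tree_def by blast
    then have "E (u @ [x]) \<in> E ` X" by blast
    then show "\<exists>x. t @ [x] \<in> E ` X" using u by (auto simp: E_def)
  qed
  have ECA: "EC R \<in> EC ` AX \<longleftrightarrow> R \<in> AX" if "AX \<subseteq> runs T1" "R \<in> runs T1" for R AX
    using that inj_EC by (auto simp: inj_on_image_mem_iff)
  have E_emb: "game_emb E X AX (E ` X) (EC ` AX)" if "X \<subseteq> T1" "AX \<subseteq> runs X" for X AX
  proof -
    have rX: "runs X \<subseteq> runs T1" using runs_mono[OF that(1)] .
    have "chronological E X (E ` X)" unfolding chronological_def E_def by (auto simp: take_map)
    moreover have "inj_on E X" by (rule inj_onI) (metis DE that(1) subsetD)
    moreover have "fbar E R \<in> EC ` AX \<longleftrightarrow> R \<in> AX" if "R \<in> runs X" for R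
    proof -
      have "fbar E R = EC R" by (simp add: E_def EC_def fbar_map)
      then show ?thesis using ECA[of AX R] \<open>AX \<subseteq> runs X\<close> rX that by auto
    qed
    ultimately show ?thesis by (simp add: game_emb_def)
  qed
  have D_emb: "game_emb Dm (E ` X) (EC ` AX) X AX" if "X \<subseteq> T1" "AX \<subseteq> runs X" for X AX
  proof -
    have rX: "runs X \<subseteq> runs T1" using runs_mono[OF that(1)] .
    have "chronological Dm (E ` X) X"
      unfolding chronological_def
    proof (intro conjI ballI allI)
      show "Dm ` E ` X \<subseteq> X" using DE that(1) by auto
    next
      fix t assume "t \<in> E ` X" then show "length (Dm t) = length t" by (simp add: Dm_def)
    next
      fix t k assume "t \<in> E ` X" then show "Dm (take k t) = take k (Dm t)" by (simp add: Dm_def take_map)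
    qed
    moreover have "inj_on Dm (E ` X)"
    proof (rule inj_onI)
      fix a b assume "a \<in> E ` X" "b \<in> E ` X" "Dm a = Dm b"
      then obtain x y where "x \<in> X" "y \<in> X" "a = E x" "b = E y" "Dm (E x) = Dm (E y)" by blast
      then show "a = b" using DE that(1) by (metis subsetD)
    qed
    moreover have "fbar Dm R' \<in> AX \<longleftrightarrow> R' \<in> EC ` AX" if R'r: "R' \<in> runs (E ` X)" for R'
    proof -
      obtain R where R: "R \<in> runs X" "R' = EC R" using R'r runsE[OF \<open>X \<subseteq> T1\<close>] by auto
      have "fbar Dm R' = R" using decEC[of R] R rX by (auto simp: Dm_def fbar_map)
      then show ?thesis using ECA[of AX R] \<open>AX \<subseteq> runs X\<close> rX R by auto
    qed
    ultimately show ?thesis by (simp add: game_emb_def)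
  qed
  define T1' where "T1' = E ` T1"
  define A1' where "A1' = EC ` A1"
  define T' where "T' = E ` T"
  define A' where "A' = EC ` A"
  have g1': "game T1' A1'"
    using gtE[OF gt1] runsE[of T1] A1r unfolding game_def T1'_def A1'_def by auto
  have ev: "\<forall>t\<in>T1'. \<forall>x\<in>set t. even x" by (auto simp: T1'_def E_def enc_def)
  have cA1': "countable A1'" using cA1 by (simp add: A1'_def)
  have fg': "finite_game T' A'"
    using gtE[OF gtT] runsE[OF TT1] Ar finT unfolding finite_game_def game_def T'_def A'_def by auto
  have sub': "subgame T' A' T1' A1'"
  proof -
    have "EC ` A = EC ` A1 \<inter> EC ` runs T"
      unfolding AT using inj_EC A1r runs_mono[OF TT1] by (intro inj_on_image_Int) auto
    then show ?thesis using TT1 runsE[OF TT1] unfolding subgame_def T'_def T1'_def A'_def A1'_def by auto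
  qed
  have emb': "game_emb (f \<circ> Dm) T' A' T2 A2"
    unfolding T'_def A'_def by (rule emb_comp[OF D_emb[OF TT1 Ar] emb])
  obtain F where F: "game_emb F T1' A1' T2 A2" and Fext: "\<forall>t\<in>T'. F t = (f \<circ> Dm) t"
    using core[OF g1' ev cA1' cA2 inj2 fg' sub' emb'] by blast
  have "game_emb (F \<circ> E) T1 A1 T2 A2"
    using emb_comp[OF E_emb[OF order_refl A1r] F[unfolded T1'_def A1'_def]] .
  moreover have "\<forall>t\<in>T. (F \<circ> E) t = f t" using Fext DE TT1 by (auto simp: T'_def)
  ultimately show ?thesis by blast
qed

end
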